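(* There exists a compact set $K\subset\mathbb{R}^2$ with positive two-dimensional Lebesgue measure such that $K+S^1$ has empty interior.
   Context: $S^1$ is the Euclidean unit circle in $\mathbb{R}^2$; $X+Y=\{x+y:x\in X,y\in Y\}$. *)

theory Defs
  imports "HOL-Analysis.Analysis"
begin

definition minkowski_sum :: "'a::plus set \<Rightarrow> 'a set \<Rightarrow> 'a set" where
  "minkowski_sum X Y = {x + y | x y. x \<in> X \<and> y \<in> Y}"

end

theory Submission
  imports Defs
begin

theorem mainTheorem10:
  shows "\<exists>K :: (real^2) set. compact K \<and> emeasure lborel K > 0 \<and>
           interior (minkowski_sum K (sphere 0 1)) = {}"
proof -
  obtain D :: "(real^2) set" where cD: "countable D"
    and dD: "\<And>X. open X \<Longrightarrow> X \<noteq> {} \<Longrightarrow> \<exists>d \<in> D. d \<in> X"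
    using countable_dense_setE by blast
  define N where "N = (\<Union>d\<in>D. sphere d (1::real))"
  have negN: "negligible N"
    unfolding N_def using cD by (auto intro!: negligible_countable_Union negligible_sphere)
  hence nN: "N \<in> null_sets lebesgue" by (simp add: negligible_iff_null_sets)
  define S where "S = cbox (0::real^2) 1 - N"
  have Sleb: "S \<in> lmeasurable"
    unfolding S_def using negN
    by (intro fmeasurable_Diff lmeasurable_cbox negligible_imp_sets)
  have mS: "measure lebesgue S = 1"
  proof -
    have "measure lebesgue S = measure lebesgue (cbox (0::real^2) 1)"
      unfolding S_def using nN by (intro measure_Diff_null_set) auto
    also have "\<dots> = 1"
    proof -
      have ne: "cbox (0::real^2) 1 \<noteq> {}" by (simp add: interval_ne_empty_cart)
      show ?thesis using content_cbox_cart[OF ne] by simp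
    qed
    finally show ?thesis .
  qed
  obtain T where T: "closed T" "T \<subseteq> S" "S - T \<in> lmeasurable"
    "emeasure lebesgue (S - T) < ennreal (1/2)"
    using sets_lebesgue_inner_closed[of S "1/2"] Sleb by auto
  have cT: "compact T"
    using T(1,2) unfolding S_def
    by (meson Diff_subset bounded_cbox bounded_subset compact_eq_bounded_closed order_trans)
  have mST: "measure lebesgue (S - T) < 1/2"
  proof -
    have "ennreal (measure lebesgue (S - T)) < ennreal (1/2)"
      using T(3,4) emeasure_eq_measure2[OF T(3)] by simp
    thus ?thesis by (subst (asm) ennreal_less_iff) auto
  qed
  have TL: "T \<in> lmeasurable" using cT lmeasurable_compact by blast
  have "measure lebesgue (S - T) = measure lebesgue S - measure lebesgue T"
    by (rule measurable_measure_Diff[OF Sleb fmeasurableD[OF TL] T(2)])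
  hence mT: "measure lebesgue T > 0" using mS mST by linarith
  have "emeasure lborel T > 0"
  proof -
    have "emeasure lborel T = emeasure lebesgue T"
      using cT by (simp add: compact_imp_closed borel_closed)
    also have "\<dots> = ennreal (measure lebesgue T)" using TL by (simp add: emeasure_eq_measure2)
    finally show ?thesis using mT by simp
  qed
  moreover have "interior (minkowski_sum T (sphere 0 1)) = {}"
  proof (rule ccontr)
    assume "interior (minkowski_sum T (sphere 0 1)) \<noteq> {}"
    then obtain d where d: "d \<in> D" "d \<in> interior (minkowski_sum T (sphere 0 1))"
      using dD[of "interior (minkowski_sum T (sphere 0 1))"] by auto
    then obtain x y where xy: "d = x + y" "x \<in> T" "y \<in> sphere (0::real^2) 1"
      using interior_subset unfolding minkowski_sum_def by blast
    have "x \<in> sphere d 1" using xy by (simp add: dist_norm)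
    hence "x \<in> N" using d(1) unfolding N_def by blast
    thus False using xy(2) T(2) unfolding S_def by blast
  qed
  ultimately show ?thesis using cT by blast
qed

end
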